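(* Let $A$ be a finite-dimensional irreducible ordered linear space. Then every order-automorphism $\chi$ of $A$ lies on an extremal ray of the cone $\mathcal{L}_{+}(A,A)$ of positive linear maps from $A$ to $A$; that is, whenever $\chi = \psi + \mu$ with $\psi,\mu \in \mathcal{L}_{+}(A,A)$, both $\psi$ and $\mu$ are non-negative scalar multiples of $\chi$.
   Context: An ordered linear space is a finite-dimensional real vector space $V$ with a positive cone $V_+$ that is a convex cone which is pointed ($V_+\cap -V_+=\{0\}$), closed and generating ($V=V_+-V_+$); $x\le y$ iff $y-x\in V_+$. A linear map $\phi:V\to W$ is positive if $\phi(V_+)\subseteq W_+$; $\mathcal{L}_+(V,W)$ denotes the cone of positive linear maps. An order-automorphism of $V$ is a linear bijection $\phi:V\to V$ with $\phi(x)\ge 0$ iff $x\ge 0$. The ordered direct sum of ordered linear spaces $V_1,V_2$ is $V_1\oplus V_2$ with positive cone $\{x+y: x\in (V_1)_+, y\in (V_2)_+\}$. $V$ is irreducible if it admits no decomposition as an ordered direct sum of two nonzero ordered subspaces. *)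

theory Defs
  imports "HOL-Analysis.Analysis"
begin

definition ordered_linear_space :: "'a::euclidean_space set \<Rightarrow> bool" where
  "ordered_linear_space P \<longleftrightarrow>
     convex_cone P \<and> P \<inter> uminus ` P = {0} \<and> closed P \<and>
     {x - y | x y. x \<in> P \<and> y \<in> P} = UNIV"

definition ordered_direct_sum_decomp ::
  "'a::euclidean_space set \<Rightarrow> 'a set \<Rightarrow> 'a set \<Rightarrow> bool" where
  "ordered_direct_sum_decomp P V1 V2 \<longleftrightarrow>
     subspace V1 \<and> subspace V2 \<and> V1 \<inter> V2 = {0} \<and>
     {x + y | x y. x \<in> V1 \<and> y \<in> V2} = UNIV \<and>
     P = {x + y | x y. x \<in> P \<inter> V1 \<and> y \<in> P \<inter> V2}"

definition irreducible_ols :: "'a::euclidean_space set \<Rightarrow> bool" where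
  "irreducible_ols P \<longleftrightarrow>
     \<not> (\<exists>V1 V2. V1 \<noteq> {0} \<and> V2 \<noteq> {0} \<and> ordered_direct_sum_decomp P V1 V2)"

definition positive_map :: "'a::euclidean_space set \<Rightarrow> ('a \<Rightarrow> 'a) \<Rightarrow> bool" where
  "positive_map P f \<longleftrightarrow> linear f \<and> f ` P \<subseteq> P"

definition order_automorphism :: "'a::euclidean_space set \<Rightarrow> ('a \<Rightarrow> 'a) \<Rightarrow> bool" where
  "order_automorphism P f \<longleftrightarrow> linear f \<and> bij f \<and> (\<forall>x. f x \<in> P \<longleftrightarrow> x \<in> P)"

end

theory Submission
  imports Defs
begin

lemma cc_sum:
  assumes "convex_cone P" "finite S" "\<forall>x\<in>S. g x \<in> P"
  shows "sum g S \<in> P"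
  using assms(2,3)
proof (induction S rule: finite_induct)
  case empty then show ?case using convex_cone_contains_0[OF assms(1)] by simp
next
  case (insert x F) then show ?case using convex_cone_add[OF assms(1)] by simp
qed

lemma pointed_D:
  fixes P :: "'a::real_vector set"
  assumes "P \<inter> uminus ` P = {0}" "x \<in> P" "- x \<in> P"
  shows "x = 0"
proof -
  have "x \<in> uminus ` P" by (rule image_eqI[of _ _ "-x"]) (simp_all add: assms)
  then show ?thesis using assms by blast
qed

lemma cone_functional:
  fixes P :: "'a::euclidean_space set"
  assumes cc: "convex_cone P" and cl: "closed P" and pt: "P \<inter> uminus ` P = {0}"
  shows "\<exists>a b. b > 0 \<and> (\<forall>x\<in>P. b * norm x \<le> inner a x)"
proof -
  define C where "C = convex hull (P \<inter> sphere 0 1)"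
  have "compact (P \<inter> sphere 0 1)" using cl by (simp add: closed_Int_compact)
  then have cC: "compact C" unfolding C_def by (rule compact_convex_hull)
  have "0 \<notin> C"
  proof
    assume "0 \<in> C"
    then obtain S u where S: "finite S" "S \<subseteq> P \<inter> sphere 0 1" "\<forall>x\<in>S. 0 \<le> u x"
      "sum u S = 1" "(\<Sum>v\<in>S. u v *\<^sub>R v) = 0"
      unfolding C_def convex_hull_explicit by blast
    obtain x0 where x0: "x0 \<in> S" "u x0 > 0"
    proof (rule ccontr)
      assume "\<not> thesis"
      then have "\<forall>x\<in>S. u x = 0" using S(3) that by force
      then show False using S(4) by simp
    qed
    have w: "(\<Sum>v\<in>S-{x0}. u v *\<^sub>R v) \<in> P"
      using S x0 by (intro cc_sum[OF cc]) (auto intro: convex_cone_scaleR[OF cc])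
    have "u x0 *\<^sub>R x0 + (\<Sum>v\<in>S-{x0}. u v *\<^sub>R v) = 0"
      using S(1,5) x0(1) by (simp add: sum.remove)
    then have "- (u x0 *\<^sub>R x0) \<in> P" using w by (metis add.commute add_eq_0_iff)
    moreover have "u x0 *\<^sub>R x0 \<in> P" using S x0 by (auto intro: convex_cone_scaleR[OF cc])
    ultimately have "u x0 *\<^sub>R x0 = 0" using pointed_D[OF pt] by blast
    then show False using x0 S(2) by auto
  qed
  then obtain a b where ab: "inner a 0 < b" "\<forall>x\<in>C. b < inner a x"
    using separating_hyperplane_closed_point[of C 0] cC
    by (metis C_def compact_imp_closed convex_convex_hull)
  have "\<forall>x\<in>P. b * norm x \<le> inner a x"
  proof
    fix x assume x: "x \<in> P"
    show "b * norm x \<le> inner a x"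
    proof (cases "x = 0")
      case True then show ?thesis by simp
    next
      case False
      have "(1 / norm x) *\<^sub>R x \<in> C" unfolding C_def
        using False x by (intro hull_inc) (auto intro: convex_cone_scaleR[OF cc])
      then have "b < inner a ((1 / norm x) *\<^sub>R x)" using ab by blast
      then have "b < inner a x / norm x" by simp
      then show ?thesis using False by (simp add: field_simps)
    qed
  qed
  then show ?thesis using ab(1) by auto
qed

lemma surj_on_span_inj:
  fixes T :: "'a::euclidean_space \<Rightarrow> 'a"
  assumes lT: "linear T" and su: "T ` span S = span S"
  shows "inj_on T (span S)"
proof -
  obtain B where B: "B \<subseteq> span S" "independent B" "span S \<subseteq> span B" "card B = dim (span S)"
    by (rule basis_exists)
  have fB: "finite B" using independent_bound[OF B(2)] by (rule conjunct1)
  have sB: "span B = span S"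
    using B(3) span_minimal[OF B(1) subspace_span] by (rule subset_antisym[rotated])
  have sTB: "span (T ` B) = span S"
    using linear_span_image[OF lT, of B] sB su by simp
  have TBsub: "T ` B \<subseteq> span S" using sTB span_superset[of "T ` B"] by simp
  have c1: "card (T ` B) \<le> dim (span S)" using card_image_le[OF fB] B(4) by simp
  have iTB: "independent (T ` B)"
    using card_le_dim_spanning[OF TBsub _ _ c1] sTB fB by simp
  have "card (T ` B) = dim (span S)"
    using basis_card_eq_dim[OF TBsub _ iTB] sTB by simp
  then have "inj_on T B" using B(4) fB by (simp add: inj_on_iff_eq_card)
  then have "inj_on T (span B)"
    using linear_inj_on_span_iff_independent_image[OF lT iTB] by simp
  then show ?thesis using sB by simp
qed

lemma main_id:
  fixes P :: "'a::euclidean_space set" and psi mu :: "'a \<Rightarrow> 'a"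
  assumes ols: "ordered_linear_space P" and irr: "irreducible_ols P"
    and pp: "positive_map P psi" and pm: "positive_map P mu"
    and sum1: "\<forall>x. psi x + mu x = x"
  shows "\<exists>l\<ge>0. psi = (\<lambda>x. l *\<^sub>R x)"
proof -
  have cc: "convex_cone P" and pt: "P \<inter> uminus ` P = {0}" and cl: "closed P"
    and gen: "{x - y | x y. x \<in> P \<and> y \<in> P} = UNIV"
    using ols unfolding ordered_linear_space_def by auto
  have lpsi: "linear psi" and psiP: "\<And>x. x\<in>P \<Longrightarrow> psi x \<in> P"
    using pp unfolding positive_map_def by auto
  have muP: "\<And>x. x\<in>P \<Longrightarrow> mu x \<in> P"
    using pm unfolding positive_map_def by auto
  obtain a b where b: "b > 0" and ab: "\<forall>x\<in>P. b * norm x \<le> inner a x"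
    using cone_functional[OF cc cl pt] by blast
  have fpos: "inner a x > 0" if "x \<in> P" "x \<noteq> 0" for x
  proof -
    have "b * norm x > 0" using b that(2) by simp
    then show ?thesis using ab that(1) by force
  qed
  define K where "K = P \<inter> {x. inner a x = 1}"
  have cvP: "convex P" using cc by (simp add: convex_cone_def)
  have cvK: "convex K" unfolding K_def by (intro convex_Int cvP convex_hyperplane)
  have clK: "closed K" unfolding K_def by (intro closed_Int cl closed_hyperplane)
  have bdK: "bounded K" unfolding bounded_iff
  proof (intro exI ballI)
    fix x assume "x \<in> K"
    then have "b * norm x \<le> 1" using ab unfolding K_def by force
    then show "norm x \<le> 1 / b" using b by (simp add: field_simps mult.commute)
  qed
  have cpK: "compact K" using clK bdK by (simp add: compact_eq_bounded_closed)
  define E where "E = {x. x extreme_point_of K}"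
  have KE: "K = convex hull E" unfolding E_def by (rule Krein_Milman_Minkowski[OF cpK cvK])
  have EK: "E \<subseteq> K" by (auto simp: E_def extreme_point_of_def)
  have EP: "e \<in> P" if "e \<in> E" for e using EK that unfolding K_def by auto
  have Enz: "e \<noteq> 0" if "e \<in> E" for e using EK that unfolding K_def by auto
  have ext: "\<exists>c. y = c *\<^sub>R e" if e: "e \<in> E" and y: "y \<in> P" and z: "z \<in> P" and eyz: "e = y + z"
    for e y z
  proof (cases "y = 0")
    case True then show ?thesis by (intro exI[of _ 0]) simp
  next
    case yn: False
    show ?thesis
    proof (cases "z = 0")
      case True then show ?thesis using eyz by (intro exI[of _ 1]) simp
    next
      case zn: False
      define fy where "fy = inner a y"
      define fz where "fz = inner a z"
      have fy: "fy > 0" using fpos y yn fy_def by simp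
      have fz: "fz > 0" using fpos z zn fz_def by simp
      have fyz: "fy + fz = 1"
        using EK e eyz unfolding K_def fy_def fz_def by (auto simp: inner_add_right)
      define y' where "y' = (1 / fy) *\<^sub>R y"
      define z' where "z' = (1 / fz) *\<^sub>R z"
      have y'K: "y' \<in> K" unfolding K_def y'_def using fy y fy_def
        by (auto intro: convex_cone_scaleR[OF cc])
      have z'K: "z' \<in> K" unfolding K_def z'_def using fz z fz_def
        by (auto intro: convex_cone_scaleR[OF cc])
      have yy: "y = fy *\<^sub>R y'" unfolding y'_def using fy by simp
      have zz: "z = fz *\<^sub>R z'" unfolding z'_def using fz by simp
      have ecomb: "e = (1 - fz) *\<^sub>R y' + fz *\<^sub>R z'"
        using eyz yy zz fyz by (metis add_diff_cancel_right')
      have "y' = z'"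
      proof (rule ccontr)
        assume ne: "y' \<noteq> z'"
        have "fz < 1" using fy fyz by simp
        then have "e \<in> open_segment y' z'"
          unfolding in_segment(2) using ne fz ecomb by blast
        then show False using e y'K z'K unfolding E_def extreme_point_of_def by blast
      qed
      then have "e = y'" using ecomb by (simp add: algebra_simps)
      then show ?thesis using yy by blast
    qed
  qed
  have repr: "\<exists>S u. finite S \<and> S \<subseteq> E \<and> (\<forall>e\<in>S. 0 \<le> u e) \<and> x = (\<Sum>e\<in>S. u e *\<^sub>R e)"
    if x: "x \<in> P" for x
  proof (cases "x = 0")
    case True then show ?thesis by (intro exI[of _ "{}"]) simp
  next
    case False
    define fx where "fx = inner a x"
    have fx: "fx > 0" using fpos x False fx_def by simp
    have "(1 / fx) *\<^sub>R x \<in> K" unfolding K_def using fx x fx_def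
      by (auto intro: convex_cone_scaleR[OF cc])
    then obtain S u where S: "finite S" "S \<subseteq> E" "\<forall>e\<in>S. 0 \<le> u e"
      "(\<Sum>v\<in>S. u v *\<^sub>R v) = (1 / fx) *\<^sub>R x"
      unfolding KE convex_hull_explicit by blast
    have "x = fx *\<^sub>R (\<Sum>v\<in>S. u v *\<^sub>R v)" using S(4) fx by simp
    also have "\<dots> = (\<Sum>v\<in>S. (fx * u v) *\<^sub>R v)" by (simp add: scaleR_sum_right)
    finally show ?thesis using S fx by (intro exI[of _ S] exI[of _ "\<lambda>v. fx * u v"]) auto
  qed
  have PspE: "P \<subseteq> span E"
  proof
    fix x assume "x \<in> P"
    then obtain S u where S: "finite S" "S \<subseteq> E" "x = (\<Sum>e\<in>S. u e *\<^sub>R e)"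
      using repr by blast
    show "x \<in> span E" unfolding S(3)
      by (intro span_sum span_scale span_base) (use S(2) in blast)
  qed
  have spanE: "span E = UNIV"
  proof -
    have "UNIV \<subseteq> span E"
    proof
      fix w :: 'a
      have "w \<in> {x - y | x y. x \<in> P \<and> y \<in> P}" using gen by simp
      then obtain x y where "w = x - y" "x \<in> P" "y \<in> P" by blast
      then show "w \<in> span E" using PspE by (auto intro: span_diff)
    qed
    then show ?thesis by blast
  qed
  obtain i :: 'a where i: "i \<in> Basis" using nonempty_Basis by blast
  have Ene: "E \<noteq> {}"
  proof
    assume "E = {}"
    then have "i \<in> span {}" using spanE by simp
    then show False using i nonzero_Basis by simp
  qed
  then obtain e0 where e0: "e0 \<in> E" by blast
  have eig: "\<exists>c. psi e = c *\<^sub>R e" if "e \<in> E" for e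
    using ext[OF that psiP[OF EP[OF that]] muP[OF EP[OF that]]] sum1 by simp
  define t where "t e = (SOME c. psi e = c *\<^sub>R e)" for e
  have tE: "psi e = t e *\<^sub>R e" if "e \<in> E" for e
    unfolding t_def using someI_ex[OF eig[OF that]] .
  define l where "l = t e0"
  define T where "T = (\<lambda>x. psi x - l *\<^sub>R x)"
  have lT: "linear T" unfolding T_def linear_iff
    using linear_add[OF lpsi] linear_scale[OF lpsi] by (simp add: algebra_simps)
  define E1 where "E1 = {e\<in>E. t e = l}"
  define E2 where "E2 = {e\<in>E. t e \<noteq> l}"
  define V1 where "V1 = span E1"
  define V2 where "V2 = span E2"
  have TV1: "T x = 0" if "x \<in> V1" for x
    using linear_eq_0_on_span[OF lT _ that[unfolded V1_def]]
    unfolding E1_def T_def using tE by auto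
  have TE2: "T e = (t e - l) *\<^sub>R e" if "e \<in> E2" for e
    using tE that unfolding E2_def T_def by (simp add: algebra_simps)
  have TV2: "T ` V2 = V2"
  proof -
    have "T ` V2 = span (T ` E2)" unfolding V2_def by (rule linear_span_image[OF lT, symmetric])
    moreover have "span (T ` E2) \<subseteq> V2"
    proof (rule span_minimal)
      show "T ` E2 \<subseteq> V2" unfolding V2_def
        using TE2 by (auto intro: span_scale span_base)
    qed (simp add: V2_def)
    moreover have "V2 \<subseteq> span (T ` E2)" unfolding V2_def
    proof (rule span_minimal)
      show "E2 \<subseteq> span (T ` E2)"
      proof
        fix e assume e: "e \<in> E2"
        then have ne: "t e - l \<noteq> 0" unfolding E2_def by simp
        have "e = (1 / (t e - l)) *\<^sub>R T e" using TE2[OF e] ne by simp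
        then show "e \<in> span (T ` E2)" using e by (metis span_base span_scale imageI)
      qed
    qed simp
    ultimately show ?thesis by blast
  qed
  have injV2: "inj_on T V2" unfolding V2_def by (rule surj_on_span_inj[OF lT TV2[unfolded V2_def]])
  have V12: "V1 \<inter> V2 = {0}"
  proof (intro subset_antisym subsetI)
    fix x assume x: "x \<in> V1 \<inter> V2"
    have "T x = T 0" using TV1 x linear_0[OF lT] by simp
    moreover have "0 \<in> V2" unfolding V2_def by (rule span_zero)
    ultimately have "x = 0" using injV2 x unfolding inj_on_def by blast
    then show "x \<in> {0}" by simp
  next
    fix x :: 'a assume "x \<in> {0}"
    then show "x \<in> V1 \<inter> V2" unfolding V1_def V2_def by (simp add: span_zero)
  qed
  have E12: "E = E1 \<union> E2" unfolding E1_def E2_def by blast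
  have sumV: "{x + y | x y. x \<in> V1 \<and> y \<in> V2} = UNIV"
    using span_Un[of E1 E2] spanE E12 unfolding V1_def V2_def by simp
  have decP: "P = {x + y | x y. x \<in> P \<inter> V1 \<and> y \<in> P \<inter> V2}"
  proof (intro subset_antisym subsetI)
    fix x assume "x \<in> P"
    then obtain S u where S: "finite S" "S \<subseteq> E" "\<forall>e\<in>S. 0 \<le> u e" "x = (\<Sum>e\<in>S. u e *\<^sub>R e)"
      using repr by blast
    have xs: "x = (\<Sum>e\<in>S \<inter> E1. u e *\<^sub>R e) + (\<Sum>e\<in>S - E1. u e *\<^sub>R e)"
      using S(1,4) by (simp add: sum.Int_Diff)
    have p1: "(\<Sum>e\<in>S \<inter> E1. u e *\<^sub>R e) \<in> P"
      using S EP by (intro cc_sum[OF cc]) (auto intro!: convex_cone_scaleR[OF cc])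
    have p2: "(\<Sum>e\<in>S - E1. u e *\<^sub>R e) \<in> P"
      using S EP by (intro cc_sum[OF cc]) (auto intro!: convex_cone_scaleR[OF cc])
    have v1: "(\<Sum>e\<in>S \<inter> E1. u e *\<^sub>R e) \<in> V1" unfolding V1_def
      by (intro span_sum span_scale span_base) auto
    have "S - E1 \<subseteq> E2" using S(2) E12 by blast
    then have v2: "(\<Sum>e\<in>S - E1. u e *\<^sub>R e) \<in> V2" unfolding V2_def
      by (intro span_sum span_scale span_base) auto
    show "x \<in> {x + y | x y. x \<in> P \<inter> V1 \<and> y \<in> P \<inter> V2}"
      using xs p1 p2 v1 v2 by blast
  next
    fix x assume "x \<in> {x + y | x y. x \<in> P \<inter> V1 \<and> y \<in> P \<inter> V2}"
    then show "x \<in> P" using convex_cone_add[OF cc] by blast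
  qed
  have dec: "ordered_direct_sum_decomp P V1 V2"
    unfolding ordered_direct_sum_decomp_def
    using V12 sumV decP by (simp add: V1_def V2_def subspace_span)
  have V1nz: "V1 \<noteq> {0}"
  proof
    assume "V1 = {0}"
    moreover have "e0 \<in> V1" unfolding V1_def E1_def l_def using e0 by (auto intro: span_base)
    ultimately show False using Enz[OF e0] by simp
  qed
  have V2z: "V2 = {0}" using irr dec V1nz unfolding irreducible_ols_def by blast
  have E2e: "E2 = {}"
  proof (rule ccontr)
    assume "E2 \<noteq> {}"
    then obtain e where e: "e \<in> E2" by blast
    then have "e \<in> V2" unfolding V2_def by (rule span_base)
    then have "e = 0" using V2z by simp
    moreover have "e \<in> E" using e unfolding E2_def by simp
    ultimately show False using Enz by blast
  qed
  have TE: "T e = 0" if "e \<in> E" for e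
    using TV1 E12 E2e that unfolding V1_def by (auto intro: span_base)
  have Tall: "T x = 0" for x
    using linear_eq_0_on_span[OF lT TE] spanE by simp
  then have psil: "psi = (\<lambda>x. l *\<^sub>R x)" unfolding T_def by (auto simp: fun_eq_iff)
  have "l \<ge> 0"
  proof (rule ccontr)
    assume "\<not> l \<ge> 0"
    then have l: "l < 0" by simp
    have "l *\<^sub>R e0 \<in> P" using psiP[OF EP[OF e0]] psil by simp
    moreover have "0 \<le> - 1 / l" using l by simp
    ultimately have "(- 1 / l) *\<^sub>R (l *\<^sub>R e0) \<in> P" using convex_cone_scaleR[OF cc] by blast
    then have "- e0 \<in> P" using l by simp
    then have "e0 = 0" using pointed_D[OF pt EP[OF e0]] by simp
    then show False using Enz[OF e0] by simp
  qed
  then show ?thesis using psil by blast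
qed

lemma reduce:
  fixes P :: "'a::euclidean_space set" and chi psi mu :: "'a \<Rightarrow> 'a"
  assumes ols: "ordered_linear_space P" and irr: "irreducible_ols P"
    and oa: "order_automorphism P chi"
    and pp: "positive_map P psi" and pm: "positive_map P mu"
    and s: "\<forall>x. chi x = psi x + mu x"
  shows "\<exists>a\<ge>0. psi = (\<lambda>x. a *\<^sub>R chi x)"
proof -
  have lc: "linear chi" and bc: "bij chi" and cP: "\<And>x. chi x \<in> P \<longleftrightarrow> x \<in> P"
    using oa unfolding order_automorphism_def by auto
  define g where "g = inv chi"
  have lg: "linear g" unfolding g_def using inj_linear_imp_inv_linear[OF lc] bc bij_is_inj by blast
  have cg: "chi (g y) = y" for y unfolding g_def using bc by (simp add: bij_is_surj surj_f_inv_f)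
  have gc: "g (chi y) = y" for y unfolding g_def using bc by (simp add: bij_is_inj inv_f_f)
  have lpsi: "linear psi" and lmu: "linear mu" using pp pm unfolding positive_map_def by auto
  have gP: "g y \<in> P" if "y \<in> P" for y using cP[of "g y"] cg that by simp
  have pp': "positive_map P (\<lambda>x. g (psi x))"
    unfolding positive_map_def using linear_compose[OF lpsi lg] pp gP
    unfolding positive_map_def o_def by auto
  have pm': "positive_map P (\<lambda>x. g (mu x))"
    unfolding positive_map_def using linear_compose[OF lmu lg] pm gP
    unfolding positive_map_def o_def by auto
  have s': "\<forall>x. g (psi x) + g (mu x) = x"
    using s linear_add[OF lg] gc by metis
  obtain l where l: "l \<ge> 0" "(\<lambda>x. g (psi x)) = (\<lambda>x. l *\<^sub>R x)"
    using main_id[OF ols irr pp' pm' s'] by blast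
  have "psi x = l *\<^sub>R chi x" for x
  proof -
    have "psi x = chi (g (psi x))" by (simp add: cg)
    also have "\<dots> = chi (l *\<^sub>R x)" using l(2) by metis
    also have "\<dots> = l *\<^sub>R chi x" by (rule linear_scale[OF lc])
    finally show ?thesis .
  qed
  then show ?thesis using l(1) by blast
qed

theorem theorem3p3:
  fixes P :: "'a::euclidean_space set" and chi psi mu :: "'a \<Rightarrow> 'a"
  assumes "ordered_linear_space P"
    and "irreducible_ols P"
    and "order_automorphism P chi"
    and "positive_map P psi" and "positive_map P mu"
    and "\<forall>x. chi x = psi x + mu x"
  shows "(\<exists>a\<ge>0. psi = (\<lambda>x. a *\<^sub>R chi x)) \<and> (\<exists>b\<ge>0. mu = (\<lambda>x. b *\<^sub>R chi x))"
proof
  show "\<exists>a\<ge>0. psi = (\<lambda>x. a *\<^sub>R chi x)" by (rule reduce[OF assms])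
  have "\<forall>x. chi x = mu x + psi x" using assms(6) by (simp add: add.commute)
  then show "\<exists>b\<ge>0. mu = (\<lambda>x. b *\<^sub>R chi x)" by (rule reduce[OF assms(1-3,5,4)])
qed

end
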